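(* Let $p$ be a prime, $e\ge 1$, and $G$ a finite abelian group of order $p^e$. Let $\rho,\tau\colon G\to\mathbf{C}^*$ be representations. If $\rho$ and $\tau$ are not equivalent, then $b_\rho b_\tau=0$ in $\mathbf{Z}[G]$. Furthermore, if $\rho$ has level $k>0$, then $b_\rho^2=p^{e-k}(1-y_\rho)b_\rho$.
   Context: A representation is a group homomorphism $\rho\colon G\to\mathbf{C}^*$. It has level $k$ if $\rho(G)$ has $p^k$ elements. Two representations are equivalent if they have the same kernel. Write $\omega=\exp(2\pi i/p)$. For $\rho$ of level $k>0$ set $b_\rho=\sum_{x\in G,\ \rho(x)=1}x-\sum_{\xi\in G,\ \rho(\xi)=\omega}\xi\in\mathbf{Z}[G]$, and let $y_\rho\in G$ be a fixed element with $\rho(y_\rho)=\omega$, so that $b_\rho=\bigl(\sum_{\rho(x)=1}x\bigr)(1-y_\rho)$. For the trivial representation $1$ (the only one of level $0$) set $b_1=\sum_{x\in G}x$. *)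

theory Defs
  imports "HOL-Algebra.Algebra" Complex_Main
begin

text \<open>Elements of the integral group ring Z[G] of a finite group G are represented
  as functions G -> int (coefficient functions), zero outside the carrier.\<close>

definition gr_mult :: "('a,'b) monoid_scheme \<Rightarrow> ('a \<Rightarrow> int) \<Rightarrow> ('a \<Rightarrow> int) \<Rightarrow> ('a \<Rightarrow> int)" where
  "gr_mult G f g = (\<lambda>z. if z \<in> carrier G
      then (\<Sum>x\<in>carrier G. f x * g (inv\<^bsub>G\<^esub> x \<otimes>\<^bsub>G\<^esub> z)) else 0)"

definition gr_zero :: "'a \<Rightarrow> int" where
  "gr_zero = (\<lambda>z. 0)"

definition gr_of :: "('a,'b) monoid_scheme \<Rightarrow> 'a \<Rightarrow> ('a \<Rightarrow> int)" where
  "gr_of G x = (\<lambda>z. if z = x then 1 else 0)"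

definition gr_one :: "('a,'b) monoid_scheme \<Rightarrow> ('a \<Rightarrow> int)" where
  "gr_one G = gr_of G \<one>\<^bsub>G\<^esub>"

definition gr_sub :: "('a \<Rightarrow> int) \<Rightarrow> ('a \<Rightarrow> int) \<Rightarrow> ('a \<Rightarrow> int)" where
  "gr_sub f g = (\<lambda>z. f z - g z)"

definition gr_smult :: "int \<Rightarrow> ('a \<Rightarrow> int) \<Rightarrow> ('a \<Rightarrow> int)" where
  "gr_smult c f = (\<lambda>z. c * f z)"

definition is_rep :: "('a,'b) monoid_scheme \<Rightarrow> ('a \<Rightarrow> complex) \<Rightarrow> bool" where
  "is_rep G \<rho> \<longleftrightarrow> (\<forall>x\<in>carrier G. \<rho> x \<noteq> 0) \<and>
     (\<forall>x\<in>carrier G. \<forall>y\<in>carrier G. \<rho> (x \<otimes>\<^bsub>G\<^esub> y) = \<rho> x * \<rho> y)"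

definition has_level :: "('a,'b) monoid_scheme \<Rightarrow> nat \<Rightarrow> ('a \<Rightarrow> complex) \<Rightarrow> nat \<Rightarrow> bool" where
  "has_level G p \<rho> k \<longleftrightarrow> card (\<rho> ` carrier G) = p ^ k"

definition rep_kernel :: "('a,'b) monoid_scheme \<Rightarrow> ('a \<Rightarrow> complex) \<Rightarrow> 'a set" where
  "rep_kernel G \<rho> = {x \<in> carrier G. \<rho> x = 1}"

definition rep_equiv :: "('a,'b) monoid_scheme \<Rightarrow> ('a \<Rightarrow> complex) \<Rightarrow> ('a \<Rightarrow> complex) \<Rightarrow> bool" where
  "rep_equiv G \<rho> \<tau> \<longleftrightarrow> rep_kernel G \<rho> = rep_kernel G \<tau>"

definition omega :: "nat \<Rightarrow> complex" where
  "omega p = exp (2 * pi * \<i> / of_nat p)"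

definition b_elt :: "('a,'b) monoid_scheme \<Rightarrow> nat \<Rightarrow> ('a \<Rightarrow> complex) \<Rightarrow> ('a \<Rightarrow> int)" where
  "b_elt G p \<rho> = (if has_level G p \<rho> 0
     then (\<lambda>z. if z \<in> carrier G then 1 else 0)
     else (\<lambda>z. if z \<in> carrier G \<and> \<rho> z = 1 then 1
               else if z \<in> carrier G \<and> \<rho> z = omega p then -1 else 0))"

end

theory Submission
  imports Defs
begin

lemma rep_mult: "is_rep G \<rho> \<Longrightarrow> x \<in> carrier G \<Longrightarrow> y \<in> carrier G \<Longrightarrow> \<rho> (x \<otimes>\<^bsub>G\<^esub> y) = \<rho> x * \<rho> y"
  by (simp add: is_rep_def)

lemma rep_nz: "is_rep G \<rho> \<Longrightarrow> x \<in> carrier G \<Longrightarrow> \<rho> x \<noteq> 0"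
  by (simp add: is_rep_def)

lemma rep_one:
  fixes G :: "('a,'b) monoid_scheme" (structure)
  assumes "group G" "is_rep G \<rho>" shows "\<rho> \<one>\<^bsub>G\<^esub> = 1"
proof -
  interpret group G by fact
  have "\<rho> \<one> = \<rho> \<one> * \<rho> \<one>" using rep_mult[OF assms(2), of \<one> \<one>] by simp
  moreover have "\<rho> \<one> \<noteq> 0" using rep_nz[OF assms(2)] by simp
  ultimately show ?thesis by simp
qed

lemma rep_inv:
  fixes G :: "('a,'b) monoid_scheme" (structure)
  assumes "group G" "is_rep G \<rho>" "x \<in> carrier G"
  shows "\<rho> (inv\<^bsub>G\<^esub> x) = inverse (\<rho> x)"
proof -
  interpret group G by fact
  have "\<rho> x * \<rho> (inv x) = 1"
    using rep_mult[OF assms(2), of x "inv x"] rep_one[OF assms(1,2)] assms(3) by simp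
  thus ?thesis by (simp add: inverse_unique)
qed

lemma rep_div:
  fixes G :: "('a,'b) monoid_scheme" (structure)
  assumes "group G" "is_rep G \<rho>" "x \<in> carrier G" "z \<in> carrier G"
  shows "\<rho> (inv\<^bsub>G\<^esub> x \<otimes>\<^bsub>G\<^esub> z) = \<rho> z / \<rho> x"
proof -
  interpret group G by fact
  show ?thesis using rep_mult[OF assms(2), of "inv x" z] rep_inv[OF assms(1,2,3)] assms
    by (simp add: field_simps)
qed

lemma rep_mult_inv:
  fixes G :: "('a,'b) monoid_scheme" (structure)
  assumes "group G" "is_rep G \<rho>" "x \<in> carrier G" "w \<in> carrier G"
  shows "\<rho> (x \<otimes>\<^bsub>G\<^esub> inv\<^bsub>G\<^esub> w) = \<rho> x / \<rho> w"
proof -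
  interpret group G by fact
  show ?thesis using rep_mult[OF assms(2), of x "inv w"] rep_inv[OF assms(1,2,4)] assms
    by (simp add: field_simps)
qed

lemma rep_pow:
  fixes G :: "('a,'b) monoid_scheme" (structure)
  assumes "group G" "is_rep G \<rho>" "x \<in> carrier G"
  shows "\<rho> (x [^]\<^bsub>G\<^esub> (n::nat)) = \<rho> x ^ n"
proof -
  interpret group G by fact
  show ?thesis
    by (induction n) (simp_all add: rep_one[OF assms(1,2)] rep_mult[OF assms(2)] assms(3))
qed

lemma sum_shift:
  fixes G :: "('a,'b) monoid_scheme" (structure)
  assumes "group G" "a \<in> carrier G"
  shows "(\<Sum>x\<in>carrier G. F x) = (\<Sum>x\<in>carrier G. F (x \<otimes>\<^bsub>G\<^esub> a))"
proof -
  interpret group G by fact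
  show ?thesis
    by (rule sum.reindex_bij_witness[of _ "\<lambda>x. x \<otimes> a" "\<lambda>x. x \<otimes> inv a"])
       (use assms(2) in \<open>simp_all add: m_assoc\<close>)
qed

lemma omega_cis: "omega p = cis (2 * pi / real p)"
  by (simp add: omega_def cis_conv_exp mult_ac)

lemma omega_ne1:
  assumes "p > 1" shows "omega p \<noteq> 1"
proof -
  have "inj_on (\<lambda>k. cis (2 * pi * real k / real p)) {..<p}"
    using bij_betw_roots_unity[of p] assms by (auto simp: bij_betw_def)
  hence "cis (2 * pi * real 1 / real p) \<noteq> cis (2 * pi * real 0 / real p)"
    by (rule inj_on_contraD) (use assms in auto)
  thus ?thesis by (simp add: omega_cis)
qed

lemma root_p:
  fixes \<eta> :: complex
  assumes "Factorial_Ring.prime (p::nat)" "\<eta> ^ p = 1" "\<eta> \<noteq> 1"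
  shows "\<exists>j. \<eta> ^ j = omega p"
proof -
  have p0: "p > 0" using assms(1) prime_gt_0_nat by blast
  have "\<eta> \<in> (\<lambda>k. cis (2 * pi * real k / real p)) ` {..<p}"
    using bij_betw_roots_unity[OF p0] assms(2) by (auto simp: bij_betw_def)
  then obtain k where k: "k < p" "\<eta> = cis (2 * pi * real k / real p)" by auto
  have "\<eta> = omega p ^ k" using k by (simp add: omega_cis DeMoivre mult_ac)
  have "k \<noteq> 0"
  proof
    assume "k = 0"
    hence "\<eta> = cis 0" using k(2) by simp
    thus False using assms(3) by simp
  qed
  have "coprime p k" using prime_imp_coprime[OF assms(1)] k \<open>k \<noteq> 0\<close>
    using dvd_imp_le[of p k] by auto
  hence "gcd k p = 1" by (simp add: coprime_iff_gcd_eq_1 gcd.commute)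
  then obtain x y where xy: "k * x = p * y + 1" using bezout_nat[OF \<open>k \<noteq> 0\<close>, of p] by auto
  have wp: "omega p ^ p = 1"
    using p0 by (simp add: omega_cis DeMoivre)
  have "\<eta> ^ x = omega p ^ (k * x)" using \<open>\<eta> = omega p ^ k\<close> by (simp add: power_mult)
  also have "\<dots> = omega p" using wp by (simp add: xy power_add power_mult)
  finally show ?thesis by blast
qed

lemma root_pe:
  fixes \<zeta> :: complex
  assumes "Factorial_Ring.prime (p::nat)" "\<zeta> ^ (p ^ e) = 1" "\<zeta> \<noteq> 1"
  shows "\<exists>N. \<zeta> ^ N = omega p"
proof -
  define m where "m = (LEAST m. \<zeta> ^ (p ^ m) = 1)"
  have m1: "\<zeta> ^ (p ^ m) = 1" unfolding m_def by (rule LeastI[of _ e]) (rule assms(2))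
  have "m \<noteq> 0" using m1 assms(3) by (cases "m = 0") auto
  then obtain n where n: "m = Suc n" by (cases m) auto
  have "\<not> \<zeta> ^ (p ^ n) = 1" using not_less_Least[of n "\<lambda>m. \<zeta> ^ (p ^ m) = 1"] n m_def by auto
  moreover have "(\<zeta> ^ (p ^ n)) ^ p = 1" using m1 n by (simp add: power_mult[symmetric] mult.commute)
  ultimately obtain j where "(\<zeta> ^ (p ^ n)) ^ j = omega p" using root_p[OF assms(1)] by blast
  thus ?thesis by (metis power_mult)
qed

lemma get_w:
  fixes G :: "('a,'b) monoid_scheme" (structure)
  assumes "group G" "finite (carrier G)" "card (carrier G) = p ^ e" "Factorial_Ring.prime p"
    "is_rep G \<sigma>" "u \<in> carrier G" "\<sigma> u \<noteq> 1"
  shows "\<exists>N. \<sigma> (u [^] (N::nat)) = omega p"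
proof -
  interpret group G by fact
  have "u [^] (p ^ e) = \<one>" using pow_order_eq_1[OF assms(6)] assms(3) by (simp add: order_def)
  hence "\<sigma> u ^ (p ^ e) = 1" using rep_pow[OF assms(1,5,6)] rep_one[OF assms(1,5)] by metis
  then obtain N where "\<sigma> u ^ N = omega p" using root_pe[OF assms(4)] assms(7) by blast
  thus ?thesis using rep_pow[OF assms(1,5,6)] by metis
qed

lemma triv_level0:
  fixes G :: "('a,'b) monoid_scheme" (structure)
  assumes "group G" "is_rep G \<rho>" "finite (carrier G)" "has_level G p \<rho> 0" "x \<in> carrier G"
  shows "\<rho> x = 1"
proof -
  interpret group G by fact
  have c: "card (\<rho> ` carrier G) = 1" using assms(4) by (simp add: has_level_def)
  have "1 \<in> \<rho> ` carrier G" using rep_one[OF assms(1,2)] by (metis one_closed image_eqI)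
  moreover have "\<rho> x \<in> \<rho> ` carrier G" using assms(5) by simp
  ultimately show ?thesis using c by (metis card_1_singletonE singletonD)
qed

lemma nontriv:
  fixes G :: "('a,'b) monoid_scheme" (structure)
  assumes "group G" "is_rep G \<rho>" "finite (carrier G)" "x \<in> carrier G" "\<rho> x \<noteq> 1"
  shows "\<not> has_level G p \<rho> 0"
  using triv_level0[OF assms(1-3) _ assms(4)] assms(5) by blast

definition bphi :: "('a,'b) monoid_scheme \<Rightarrow> nat \<Rightarrow> ('a \<Rightarrow> complex) \<Rightarrow> complex \<Rightarrow> int" where
  "bphi G p \<rho> c = (if has_level G p \<rho> 0 then 1 else if c = 1 then 1 else if c = omega p then -1 else 0)"

lemma b_elt_eq: "z \<in> carrier G \<Longrightarrow> b_elt G p \<rho> z = bphi G p \<rho> (\<rho> z)"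
  by (simp add: b_elt_def bphi_def)

lemma bphi_nontriv: "\<not> has_level G p \<rho> 0 \<Longrightarrow> p > 1 \<Longrightarrow>
  bphi G p \<rho> c = (if c = 1 then 1 else 0) - (if c = omega p then 1 else 0)"
  using omega_ne1[of p] by (auto simp: bphi_def)

lemma fiber_card:
  fixes G :: "('a,'b) monoid_scheme" (structure)
  assumes "group G" "is_rep G \<rho>" "a \<in> carrier G"
  shows "card {x \<in> carrier G. \<rho> x = \<rho> a} = card (rep_kernel G \<rho>)"
proof -
  interpret group G by fact
  have "bij_betw (\<lambda>k. a \<otimes> k) (rep_kernel G \<rho>) {x \<in> carrier G. \<rho> x = \<rho> a}"
  proof (rule bij_betw_byWitness[where f' = "\<lambda>x. inv a \<otimes> x"])
    show "\<forall>k\<in>rep_kernel G \<rho>. inv a \<otimes> (a \<otimes> k) = k"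
      using assms(3) by (auto simp: rep_kernel_def m_assoc[symmetric])
    show "\<forall>x\<in>{x \<in> carrier G. \<rho> x = \<rho> a}. a \<otimes> (inv a \<otimes> x) = x"
      using assms(3) by (auto simp: m_assoc[symmetric])
    show "(\<lambda>k. a \<otimes> k) ` rep_kernel G \<rho> \<subseteq> {x \<in> carrier G. \<rho> x = \<rho> a}"
      using assms(3) by (auto simp: rep_kernel_def rep_mult[OF assms(2)])
    show "(\<lambda>x. inv a \<otimes> x) ` {x \<in> carrier G. \<rho> x = \<rho> a} \<subseteq> rep_kernel G \<rho>"
      using assms(3) rep_nz[OF assms(2)] by (auto simp: rep_kernel_def rep_div[OF assms(1,2)])
  qed
  thus ?thesis by (metis bij_betw_same_card)
qed

lemma card_fibers:
  fixes G :: "('a,'b) monoid_scheme" (structure)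
  assumes "group G" "is_rep G \<rho>" "finite (carrier G)"
  shows "card (carrier G) = card (\<rho> ` carrier G) * card (rep_kernel G \<rho>)"
proof -
  have "card (carrier G) = (\<Sum>c\<in>\<rho> ` carrier G. card {x \<in> carrier G. \<rho> x = c})"
    using sum.image_gen[OF assms(3), of "\<lambda>_. 1::nat" \<rho>] by simp
  also have "\<dots> = (\<Sum>c\<in>\<rho> ` carrier G. card (rep_kernel G \<rho>))"
    by (rule sum.cong) (auto simp: fiber_card[OF assms(1,2)])
  finally show ?thesis by simp
qed

lemma gr_mult_at: "z \<in> carrier G \<Longrightarrow> gr_mult G f g z = (\<Sum>x\<in>carrier G. f x * g (inv\<^bsub>G\<^esub> x \<otimes>\<^bsub>G\<^esub> z))"
  by (simp add: gr_mult_def)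

lemma kernel_card:
  fixes G :: "('a,'b) monoid_scheme" (structure)
  assumes "group G" "is_rep G \<rho>" "finite (carrier G)" "card (carrier G) = p ^ e"
    "Factorial_Ring.prime p" "has_level G p \<rho> k"
  shows "card (rep_kernel G \<rho>) = p ^ (e - k)"
proof -
  have p1: "p > 1" using assms(5) prime_gt_1_nat by blast
  have eq: "p ^ e = p ^ k * card (rep_kernel G \<rho>)"
    using card_fibers[OF assms(1-3)] assms(4,6) by (simp add: has_level_def)
  have "p ^ e \<noteq> 0" using p1 by simp
  hence c0: "card (rep_kernel G \<rho>) \<noteq> 0" using eq by (metis mult_0_right)
  have "p ^ k \<le> p ^ e" using eq c0 by (metis dvd_imp_le dvd_triv_left gr0I power_not_zero p1 not_one_less_zero)
  hence ke: "k \<le> e" using p1 power_le_imp_le_exp by blast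
  have pe: "p ^ e = p ^ k * p ^ (e - k)" using ke by (metis le_add_diff_inverse power_add)
  have "p ^ k * p ^ (e - k) = p ^ k * card (rep_kernel G \<rho>)" using eq pe by argo
  moreover have "p ^ k \<noteq> 0" using p1 by simp
  ultimately show ?thesis by (metis mult_left_cancel)
qed

lemma part2:
  fixes G :: "('a,'b) monoid_scheme" (structure)
  assumes grp: "group G" and fin: "finite (carrier G)" and cG: "card (carrier G) = p ^ e"
    and pr: "Factorial_Ring.prime p" and rep: "is_rep G \<rho>" and lev: "has_level G p \<rho> k"
    and k0: "k > 0" and y: "y \<in> carrier G" and ry: "\<rho> y = omega p"
  shows "gr_mult G (b_elt G p \<rho>) (b_elt G p \<rho>)
              = gr_smult (int (p ^ (e - k)))
                  (gr_mult G (gr_sub (gr_one G) (gr_of G y)) (b_elt G p \<rho>))"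
proof (rule ext)
  interpret group G by fact
  fix z
  show "gr_mult G (b_elt G p \<rho>) (b_elt G p \<rho>) z
      = gr_smult (int (p ^ (e - k))) (gr_mult G (gr_sub (gr_one G) (gr_of G y)) (b_elt G p \<rho>)) z"
  proof (cases "z \<in> carrier G")
    case False
    thus ?thesis by (simp add: gr_mult_def gr_smult_def)
  next
    case z: True
    define b where "b = b_elt G p \<rho>"
    have p1: "p > 1" using pr prime_gt_1_nat by blast
    have nt: "\<not> has_level G p \<rho> 0"
      using lev k0 p1 by (auto simp: has_level_def)
    have bx: "b x = (if \<rho> x = 1 then 1 else 0) - (if \<rho> x = omega p then 1 else 0)"
      if "x \<in> carrier G" for x
      using that b_elt_eq[of x G p \<rho>] bphi_nontriv[OF nt p1] by (simp add: b_def)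
    have cK: "card (rep_kernel G \<rho>) = p ^ (e - k)"
      by (rule kernel_card[OF grp rep fin cG pr lev])
    have "gr_mult G b b z = (\<Sum>x\<in>carrier G. ((if \<rho> x = 1 then 1 else 0) - (if \<rho> x = omega p then 1 else 0)) * b (inv x \<otimes> z))"
      using z by (simp add: gr_mult_at bx)
    also have "\<dots> = (\<Sum>x\<in>carrier G. if \<rho> x = 1 then b (inv x \<otimes> z) else 0)
                   - (\<Sum>x\<in>carrier G. if \<rho> x = \<rho> y then b (inv x \<otimes> z) else 0)"
      by (subst sum_subtractf[symmetric]) (auto simp: ry left_diff_distrib intro!: sum.cong)
    also have "\<dots> = (\<Sum>x\<in>{x\<in>carrier G. \<rho> x = 1}. b (inv x \<otimes> z))
                   - (\<Sum>x\<in>{x\<in>carrier G. \<rho> x = \<rho> y}. b (inv x \<otimes> z))"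
      using fin by (simp add: sum.inter_filter)
    also have "\<dots> = (\<Sum>x\<in>{x\<in>carrier G. \<rho> x = 1}. b z)
                   - (\<Sum>x\<in>{x\<in>carrier G. \<rho> x = \<rho> y}. b (inv y \<otimes> z))"
    proof -
      have "(\<Sum>x\<in>{x\<in>carrier G. \<rho> x = 1}. b (inv x \<otimes> z)) = (\<Sum>x\<in>{x\<in>carrier G. \<rho> x = 1}. b z)"
        by (rule sum.cong) (use z in \<open>auto simp: b_def b_elt_eq rep_div[OF grp rep]\<close>)
      moreover have "(\<Sum>x\<in>{x\<in>carrier G. \<rho> x = \<rho> y}. b (inv x \<otimes> z)) = (\<Sum>x\<in>{x\<in>carrier G. \<rho> x = \<rho> y}. b (inv y \<otimes> z))"
        by (rule sum.cong) (use z y in \<open>auto simp: b_def b_elt_eq rep_div[OF grp rep]\<close>)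
      ultimately show ?thesis by simp
    qed
    also have "\<dots> = int (card (rep_kernel G \<rho>)) * (b z - b (inv y \<otimes> z))"
      using fiber_card[OF grp rep y] by (simp add: rep_kernel_def right_diff_distrib)
    also have "\<dots> = int (p ^ (e - k)) * (b z - b (inv y \<otimes> z))" using cK by simp
    also have "b z - b (inv y \<otimes> z) = gr_mult G (gr_sub (gr_one G) (gr_of G y)) b z"
    proof -
      have "gr_mult G (gr_sub (gr_one G) (gr_of G y)) b z
          = (\<Sum>x\<in>carrier G. (if x = \<one> then b (inv x \<otimes> z) else 0) - (if x = y then b (inv x \<otimes> z) else 0))"
        using z by (simp add: gr_mult_at gr_sub_def gr_one_def gr_of_def left_diff_distrib) (rule sum.cong, auto)
      also have "\<dots> = b z - b (inv y \<otimes> z)"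
        using z y fin by (simp add: sum_subtractf sum.delta)
      finally show ?thesis by simp
    qed
    finally show ?thesis by (simp add: b_def gr_smult_def)
  qed
qed

lemma omega_nz: "omega p \<noteq> 0"
  by (simp add: omega_def)

lemma caseA:
  fixes G :: "('a,'b) monoid_scheme" (structure)
  assumes grp: "group G" and fin: "finite (carrier G)" and p1: "p > 1"
    and r: "is_rep G \<rho>" and t: "is_rep G \<tau>" and nt: "\<not> has_level G p \<tau> 0"
    and w: "w \<in> carrier G" and rw: "\<rho> w = 1" and tw: "\<tau> w = omega p"
  shows "gr_mult G (b_elt G p \<rho>) (b_elt G p \<tau>) = gr_zero"
proof (rule ext)
  interpret group G by fact
  fix z
  show "gr_mult G (b_elt G p \<rho>) (b_elt G p \<tau>) z = gr_zero z"
  proof (cases "z \<in> carrier G")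
    case False
    thus ?thesis by (simp add: gr_mult_def gr_zero_def)
  next
    case z: True
    define F where "F x = b_elt G p \<rho> x * (if \<tau> z / \<tau> x = 1 then 1 else 0)" for x
    define H where "H x = b_elt G p \<rho> x * (if \<tau> z / \<tau> x = omega p then 1 else 0)" for x
    have "gr_mult G (b_elt G p \<rho>) (b_elt G p \<tau>) z = (\<Sum>x\<in>carrier G. F x - H x)"
      unfolding gr_mult_at[OF z]
      by (rule sum.cong) (use z in \<open>simp_all add: F_def H_def b_elt_eq[of _ G p \<tau>] rep_div[OF grp t] bphi_nontriv[OF nt p1] right_diff_distrib\<close>)
    also have "\<dots> = sum F (carrier G) - sum H (carrier G)" by (simp add: sum_subtractf)
    also have "sum H (carrier G) = (\<Sum>x\<in>carrier G. H (x \<otimes> inv w))"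
      by (rule sum_shift[OF grp]) (use w in simp)
    also have "\<dots> = sum F (carrier G)"
    proof (rule sum.cong)
      fix x assume x: "x \<in> carrier G"
      have "\<tau> (x \<otimes> inv w) = \<tau> x / omega p" using rep_mult_inv[OF grp t x w] tw by simp
      moreover have "b_elt G p \<rho> (x \<otimes> inv w) = b_elt G p \<rho> x"
        using x w rep_mult_inv[OF grp r x w] rw by (simp add: b_elt_eq)
      moreover have "(\<tau> z / (\<tau> x / omega p) = omega p) = (\<tau> z / \<tau> x = 1)"
        using omega_nz[of p] rep_nz[OF t x] rep_nz[OF t z] by (auto simp: field_simps)
      ultimately show "H (x \<otimes> inv w) = F x" by (simp add: H_def F_def)
    qed simp
    finally show ?thesis by (simp add: gr_zero_def)
  qed
qed

lemma caseB:
  fixes G :: "('a,'b) monoid_scheme" (structure)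
  assumes grp: "group G" and fin: "finite (carrier G)" and p1: "p > 1"
    and r: "is_rep G \<rho>" and t: "is_rep G \<tau>" and nt: "\<not> has_level G p \<rho> 0"
    and w: "w \<in> carrier G" and tw: "\<tau> w = 1" and rw: "\<rho> w = omega p"
  shows "gr_mult G (b_elt G p \<rho>) (b_elt G p \<tau>) = gr_zero"
proof (rule ext)
  interpret group G by fact
  fix z
  show "gr_mult G (b_elt G p \<rho>) (b_elt G p \<tau>) z = gr_zero z"
  proof (cases "z \<in> carrier G")
    case False
    thus ?thesis by (simp add: gr_mult_def gr_zero_def)
  next
    case z: True
    define F where "F x = (if \<rho> x = 1 then b_elt G p \<tau> (inv x \<otimes> z) else 0)" for x
    define H where "H x = (if \<rho> x = omega p then b_elt G p \<tau> (inv x \<otimes> z) else 0)" for x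
    have "gr_mult G (b_elt G p \<rho>) (b_elt G p \<tau>) z = (\<Sum>x\<in>carrier G. F x - H x)"
      unfolding gr_mult_at[OF z]
      by (rule sum.cong) (use z in \<open>simp_all add: F_def H_def b_elt_eq[of _ G p \<rho>] bphi_nontriv[OF nt p1] left_diff_distrib\<close>)
    also have "\<dots> = sum F (carrier G) - sum H (carrier G)" by (simp add: sum_subtractf)
    also have "sum H (carrier G) = (\<Sum>x\<in>carrier G. H (x \<otimes> w))"
      by (rule sum_shift[OF grp]) (use w in simp)
    also have "\<dots> = sum F (carrier G)"
    proof (rule sum.cong)
      fix x assume x: "x \<in> carrier G"
      have "\<rho> (x \<otimes> w) = \<rho> x * omega p" using rep_mult[OF r x w] rw by simp
      moreover have "b_elt G p \<tau> (inv (x \<otimes> w) \<otimes> z) = b_elt G p \<tau> (inv x \<otimes> z)"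
        using x w z rep_div[OF grp t, of "x \<otimes> w" z] rep_div[OF grp t x z] rep_mult[OF t x w] tw
        by (simp add: b_elt_eq)
      moreover have "(\<rho> x * omega p = omega p) = (\<rho> x = 1)"
        using omega_nz[of p] by auto
      ultimately show "H (x \<otimes> w) = F x" by (simp add: H_def F_def)
    qed simp
    finally show ?thesis by (simp add: gr_zero_def)
  qed
qed

theorem mainTheorem1:
  fixes G :: "('a, 'b) monoid_scheme" and p e :: nat
  assumes "Factorial_Ring.prime p" and "e \<ge> 1"
    and "comm_group G" and "finite (carrier G)" and "card (carrier G) = p ^ e"
  shows "(\<forall>\<rho> \<tau>. is_rep G \<rho> \<longrightarrow> is_rep G \<tau> \<longrightarrow> \<not> rep_equiv G \<rho> \<tau> \<longrightarrow>
            gr_mult G (b_elt G p \<rho>) (b_elt G p \<tau>) = gr_zero)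
       \<and> (\<forall>\<rho> k y. is_rep G \<rho> \<longrightarrow> has_level G p \<rho> k \<longrightarrow> k > 0 \<longrightarrow>
            y \<in> carrier G \<longrightarrow> \<rho> y = omega p \<longrightarrow>
            gr_mult G (b_elt G p \<rho>) (b_elt G p \<rho>)
              = gr_smult (int (p ^ (e - k)))
                  (gr_mult G (gr_sub (gr_one G) (gr_of G y)) (b_elt G p \<rho>)))"
proof (intro conjI allI impI)
  interpret comm_group G by fact
  have grp: "group G" by (rule is_group)
  have p1: "p > 1" using assms(1) prime_gt_1_nat by blast
  show "gr_mult G (b_elt G p \<rho>) (b_elt G p \<rho>) = gr_smult (int (p ^ (e - k)))
          (gr_mult G (gr_sub (gr_one G) (gr_of G y)) (b_elt G p \<rho>))"
    if "is_rep G \<rho>" "has_level G p \<rho> k" "k > 0" "y \<in> carrier G" "\<rho> y = omega p" for \<rho> k y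
    by (rule part2[OF grp assms(4,5,1) that])
  fix \<rho> \<tau>
  assume r: "is_rep G \<rho>" and t: "is_rep G \<tau>" and ne: "\<not> rep_equiv G \<rho> \<tau>"
  from ne obtain u where u: "u \<in> carrier G" "(\<rho> u = 1 \<and> \<tau> u \<noteq> 1) \<or> (\<tau> u = 1 \<and> \<rho> u \<noteq> 1)"
    using ne unfolding rep_equiv_def rep_kernel_def by auto
  show "gr_mult G (b_elt G p \<rho>) (b_elt G p \<tau>) = gr_zero"
  proof (cases "\<rho> u = 1 \<and> \<tau> u \<noteq> 1")
    case True
    obtain N where N: "\<tau> (u [^]\<^bsub>G\<^esub> (N::nat)) = omega p"
      using get_w[OF grp assms(4,5,1) t u(1)] True by auto
    have w1: "\<rho> (u [^]\<^bsub>G\<^esub> N) = 1" using rep_pow[OF grp r u(1), of N] True by simp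
    have nt: "\<not> has_level G p \<tau> 0" by (rule nontriv[OF grp t assms(4) u(1)]) (use True in simp)
    have wc: "u [^]\<^bsub>G\<^esub> N \<in> carrier G" using u(1) by simp
    show ?thesis using caseA[OF grp assms(4) p1 r t nt wc w1 N] .
  next
    case False
    hence F: "\<tau> u = 1" "\<rho> u \<noteq> 1" using u(2) by auto
    obtain N where N: "\<rho> (u [^]\<^bsub>G\<^esub> (N::nat)) = omega p"
      using get_w[OF grp assms(4,5,1) r u(1)] F by auto
    have w1: "\<tau> (u [^]\<^bsub>G\<^esub> N) = 1" using rep_pow[OF grp t u(1), of N] F by simp
    have nt: "\<not> has_level G p \<rho> 0" by (rule nontriv[OF grp r assms(4) u(1)]) (use F in simp)
    have wc: "u [^]\<^bsub>G\<^esub> N \<in> carrier G" using u(1) by simp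
    show ?thesis using caseB[OF grp assms(4) p1 r t nt wc w1 N] .
  qed
qed

end
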